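(* Let $\mathcal A$ be a finite set and $\pi^{\mathrm{ref}}\in\Delta(\mathcal A)$ with $\min_{a\in\mathcal A}\pi^{\mathrm{ref}}(a)=\alpha>0$. Then the map $\pi\mapsto\mathrm{KL}(\pi^{\mathrm{ref}}\|\pi)$, viewed as a map from the relative interior $\mathrm{ri}(\Delta(\mathcal A))$ to $\mathbb R_+$, is $\Theta(\alpha)$-strongly convex with respect to the $L^1$ distance.
   Context: $\mathrm{KL}(P\|Q)=\sum_aP(a)\log(P(a)/Q(a))$. $\mathrm{ri}(\Delta(\mathcal A))$ is the set of probability vectors with all entries strictly positive. $\Theta(\alpha)$ means the strong convexity modulus is a constant multiple of $\alpha$ (absolute constant). *)

theory Defs
  imports Complex_Main
begin

text \<open>Probability simplex over a finite carrier A (distributions as functions, values off A irrelevant).\<close>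
definition prob_simplex :: "'a set \<Rightarrow> ('a \<Rightarrow> real) \<Rightarrow> bool" where
  "prob_simplex A p \<longleftrightarrow> (\<forall>a\<in>A. 0 \<le> p a) \<and> sum p A = 1"

definition ri_simplex :: "'a set \<Rightarrow> ('a \<Rightarrow> real) set" where
  "ri_simplex A = {p. (\<forall>a\<in>A. 0 < p a) \<and> sum p A = 1}"

definition KL :: "'a set \<Rightarrow> ('a \<Rightarrow> real) \<Rightarrow> ('a \<Rightarrow> real) \<Rightarrow> real" where
  "KL A P Q = (\<Sum>a\<in>A. P a * ln (P a / Q a))"

definition L1_dist :: "'a set \<Rightarrow> ('a \<Rightarrow> real) \<Rightarrow> ('a \<Rightarrow> real) \<Rightarrow> real" where
  "L1_dist A p q = (\<Sum>a\<in>A. \<bar>p a - q a\<bar>)"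

definition strongly_convex_wrt ::
  "('a \<Rightarrow> real) set \<Rightarrow> (('a \<Rightarrow> real) \<Rightarrow> real) \<Rightarrow> real
     \<Rightarrow> (('a \<Rightarrow> real) \<Rightarrow> ('a \<Rightarrow> real) \<Rightarrow> real) \<Rightarrow> bool" where
  "strongly_convex_wrt S f mu d \<longleftrightarrow>
     (\<forall>x\<in>S. \<forall>y\<in>S. \<forall>t::real. 0 \<le> t \<and> t \<le> 1 \<longrightarrow>
        f (\<lambda>a. t * x a + (1 - t) * y a)
          \<le> t * f x + (1 - t) * f y - mu / 2 * t * (1 - t) * (d x y)\<^sup>2)"

end

theory Submission
  imports Defs "HOL-Analysis.Analysis"
begin

lemma phi_convex:
  fixes M :: real assumes M: "M > 0"
  shows "convex_on {0<..M} (\<lambda>s. - ln s - s^2 / (2*M^2))"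
proof (rule convex_on_realI[where f' = "\<lambda>s. - 1/s - s / M^2"])
  show "connected {0<..M}" by simp
  fix x assume x: "x \<in> {0<..M}"
  show "((\<lambda>s. - ln s - s^2 / (2*M^2)) has_real_derivative - 1/x - x / M^2) (at x)"
    using x M by (auto intro!: derivative_eq_intros simp: field_simps power2_eq_square)
next
  fix x y :: real assume x: "x \<in> {0<..M}" and y: "y \<in> {0<..M}" and xy: "x \<le> y"
  have "x*y \<le> M^2" using x y by (simp add: power2_eq_square mult_mono)
  hence "(y-x)/M^2 \<le> (y-x)/(x*y)"
    using x y xy by (intro divide_left_mono) auto
  also have "\<dots> = 1/x - 1/y" using x y by (simp add: field_simps)
  finally show "- 1/x - x / M^2 \<le> - 1/y - y / M^2" by (simp add: diff_divide_distrib)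
qed

lemma one_dim:
  fixes M x y t :: real
  assumes M: "M > 0" and x: "0 < x" "x \<le> M" and y: "0 < y" "y \<le> M" and t: "0 \<le> t" "t \<le> 1"
  shows "t*ln x + (1-t)*ln y \<le> ln (t*x+(1-t)*y) - t*(1-t)*(x-y)^2/(2*M^2)"
proof -
  have "(\<lambda>s. - ln s - s^2 / (2*M^2)) ((1 - t) *\<^sub>R y + t *\<^sub>R x)
     \<le> (1 - t) * (\<lambda>s. - ln s - s^2 / (2*M^2)) y + t * (\<lambda>s. - ln s - s^2 / (2*M^2)) x"
    by (rule convex_onD[OF phi_convex[OF M]]) (use x y t in auto)
  hence h: "- ln (t*x+(1-t)*y) - (t*x+(1-t)*y)^2/(2*M^2)
      \<le> (1-t)*(- ln y - y^2/(2*M^2)) + t*(- ln x - x^2/(2*M^2))"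
    by (simp add: algebra_simps)
  have e: "t*x^2 + (1-t)*y^2 - (t*x+(1-t)*y)^2 = t*(1-t)*(x-y)^2"
    by (simp add: algebra_simps power2_eq_square)
  have "t*(1-t)*(x-y)^2/(2*M^2) = (t*x^2 + (1-t)*y^2)/(2*M^2) - (t*x+(1-t)*y)^2/(2*M^2)"
    by (simp add: e[symmetric] diff_divide_distrib)
  moreover have "(t*x^2 + (1-t)*y^2)/(2*M^2) = t*(x^2/(2*M^2)) + (1-t)*(y^2/(2*M^2))"
    by (simp add: add_divide_distrib)
  ultimately show ?thesis using h by (simp add: algebra_simps)
qed

theorem lemma5p1:
  shows "\<exists>c::real. c > 0 \<and>
    (\<forall>(A::nat set) (pref::nat \<Rightarrow> real).
       finite A \<and> A \<noteq> {} \<and> prob_simplex A pref \<and> Min (pref ` A) > 0 \<longrightarrow>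
       strongly_convex_wrt (ri_simplex A) (\<lambda>p. KL A pref p)
         (c * Min (pref ` A)) (L1_dist A))"
proof (intro exI[of _ "1/2"] conjI allI impI)
  fix A :: "nat set" and P :: "nat \<Rightarrow> real"
  assume H: "finite A \<and> A \<noteq> {} \<and> prob_simplex A P \<and> Min (P ` A) > 0"
  define \<alpha> where "\<alpha> = Min (P ` A)"
  have fin: "finite A" and apos: "\<alpha> > 0" using H by (auto simp: \<alpha>_def)
  have Pa: "\<And>a. a \<in> A \<Longrightarrow> \<alpha> \<le> P a" using fin by (auto simp: \<alpha>_def)
  show "strongly_convex_wrt (ri_simplex A) (\<lambda>p. KL A P p) (1/2 * Min (P ` A)) (L1_dist A)"
    unfolding strongly_convex_wrt_def \<alpha>_def[symmetric]
  proof (intro ballI allI impI)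
    fix x y :: "nat \<Rightarrow> real" and t :: real
    assume xS: "x \<in> ri_simplex A" and yS: "y \<in> ri_simplex A" and t: "0 \<le> t \<and> t \<le> 1"
    have xp: "\<And>a. a \<in> A \<Longrightarrow> 0 < x a" and xs: "sum x A = 1"
      and yp: "\<And>a. a \<in> A \<Longrightarrow> 0 < y a" and ys: "sum y A = 1"
      using xS yS by (auto simp: ri_simplex_def)
    have x1: "\<And>a. a \<in> A \<Longrightarrow> x a \<le> 1"
      by (metis xs member_le_sum[of _ A x] xp fin less_imp_le DiffD1)
    have y1: "\<And>a. a \<in> A \<Longrightarrow> y a \<le> 1"
      by (metis ys member_le_sum[of _ A y] yp fin less_imp_le DiffD1)
    define M where "M a = max (x a) (y a)" for a
    define d where "d a = x a - y a" for a
    define z where "z a = t * x a + (1 - t) * y a" for a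
    have Mp: "\<And>a. a \<in> A \<Longrightarrow> 0 < M a" using xp yp by (auto simp: M_def max_def)
    have P0: "\<And>a. a \<in> A \<Longrightarrow> 0 \<le> P a" using Pa apos by (meson less_le_trans less_imp_le)
    have zp: "\<And>a. a \<in> A \<Longrightarrow> 0 < z a"
    proof -
      fix a assume a: "a \<in> A"
      have "0 \<le> t * x a" "0 \<le> (1-t) * y a" using t xp[OF a] yp[OF a] by auto
      moreover have "0 < t * x a \<or> 0 < (1-t) * y a"
        using t xp[OF a] yp[OF a] by (cases "t = 0") auto
      ultimately show "0 < z a" unfolding z_def by linarith
    qed
    have pt: "P a * ln (P a / z a) \<le> t * (P a * ln (P a / x a)) + (1-t) * (P a * ln (P a / y a))
        - P a * (t*(1-t)*(d a)^2/(2*(M a)^2))" if a: "a \<in> A" for a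
    proof (cases "P a = 0")
      case True then show ?thesis by simp
    next
      case False
      hence Ppos: "P a > 0" using P0[OF a] by simp
      have o: "t*ln (x a) + (1-t)*ln (y a) \<le> ln (z a) - t*(1-t)*(d a)^2/(2*(M a)^2)"
        unfolding z_def d_def
        by (rule one_dim) (use Mp[OF a] xp[OF a] yp[OF a] t in \<open>auto simp: M_def\<close>)
      have "P a * (t*ln (x a) + (1-t)*ln (y a)) \<le> P a * (ln (z a) - t*(1-t)*(d a)^2/(2*(M a)^2))"
        using o P0[OF a] by (rule mult_left_mono)
      thus ?thesis
        using Ppos xp[OF a] yp[OF a] zp[OF a] by (simp add: ln_div algebra_simps)
    qed
    define Q where "Q = (\<Sum>a\<in>A. (d a)^2/(M a)^2)"
    have sum1: "KL A P z \<le> t * KL A P x + (1-t) * KL A P y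
        - t*(1-t)/2 * (\<Sum>a\<in>A. P a * ((d a)^2/(M a)^2))"
    proof -
      have "KL A P z \<le> (\<Sum>a\<in>A. t * (P a * ln (P a / x a)) + (1-t) * (P a * ln (P a / y a))
        - P a * (t*(1-t)*(d a)^2/(2*(M a)^2)))"
        unfolding KL_def by (rule sum_mono) (rule pt)
      also have "\<dots> = t * KL A P x + (1-t) * KL A P y
        - t*(1-t)/2 * (\<Sum>a\<in>A. P a * ((d a)^2/(M a)^2))"
        by (simp add: KL_def sum.distrib sum_subtractf sum_distrib_left algebra_simps)
      finally show ?thesis .
    qed
    have s2: "\<alpha> * Q \<le> (\<Sum>a\<in>A. P a * ((d a)^2/(M a)^2))"
      unfolding Q_def sum_distrib_left
      by (rule sum_mono) (rule mult_right_mono, auto intro: Pa)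
    have cs: "(L1_dist A x y)^2 \<le> (\<Sum>a\<in>A. (M a)^2) * Q"
    proof -
      have "L1_dist A x y = (\<Sum>a\<in>A. M a * (\<bar>d a\<bar> / M a))"
        unfolding L1_dist_def d_def using Mp by (intro sum.cong) (auto dest!: Mp)
      hence "(L1_dist A x y)^2 \<le> (\<Sum>a\<in>A. (M a)^2) * (\<Sum>a\<in>A. (\<bar>d a\<bar> / M a)^2)"
        using Cauchy_Schwarz_ineq_sum[of M "\<lambda>a. \<bar>d a\<bar> / M a" A] by simp
      thus ?thesis unfolding Q_def by (simp add: power_divide)
    qed
    have M2: "(\<Sum>a\<in>A. (M a)^2) \<le> 2"
    proof -
      have "(\<Sum>a\<in>A. (M a)^2) \<le> (\<Sum>a\<in>A. x a + y a)"
      proof (rule sum_mono)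
        fix a assume a: "a \<in> A"
        have "x a ^2 \<le> x a" "y a ^2 \<le> y a"
          using xp[OF a] yp[OF a] x1[OF a] y1[OF a] by (auto simp: power2_eq_square mult_le_cancel_left1)
        thus "(M a)^2 \<le> x a + y a" using xp[OF a] yp[OF a] by (auto simp: M_def max_def)
      qed
      also have "\<dots> = 2" using xs ys by (simp add: sum.distrib)
      finally show ?thesis .
    qed
    have Q0: "Q \<ge> 0" unfolding Q_def by (auto intro: sum_nonneg)
    have "(L1_dist A x y)^2 \<le> 2 * Q"
      using cs M2 Q0 by (meson mult_right_mono order_trans)
    hence key: "1/2 * \<alpha> * (L1_dist A x y)^2 \<le> (\<Sum>a\<in>A. P a * ((d a)^2/(M a)^2))"
    proof -
      have "\<alpha> * (L1_dist A x y)^2 \<le> \<alpha> * (2 * Q)"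
        using \<open>(L1_dist A x y)^2 \<le> 2 * Q\<close> apos by (intro mult_left_mono) auto
      thus ?thesis using s2 by linarith
    qed
    have tt: "t*(1-t)/2 \<ge> 0" using t by auto
    have "(\<lambda>a. t * x a + (1 - t) * y a) = z" by (simp add: z_def fun_eq_iff)
    hence "KL A P (\<lambda>a. t * x a + (1 - t) * y a) = KL A P z" by simp
    also have "\<dots> \<le> t * KL A P x + (1-t) * KL A P y - t*(1-t)/2 * (1/2 * \<alpha> * (L1_dist A x y)^2)"
      using sum1 mult_left_mono[OF key tt] by linarith
    finally show "KL A P (\<lambda>a. t * x a + (1 - t) * y a)
        \<le> t * KL A P x + (1 - t) * KL A P y - 1 / 2 * \<alpha> / 2 * t * (1 - t) * (L1_dist A x y)\<^sup>2"
      by (simp add: algebra_simps)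
  qed
qed simp

end
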